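(* Let $M=(X,rk)$ be a matroid on a finite ground set $X$ with rank $r=rk(X)$. Then for every integer $j$ with $j>f_2(M)-r$, \[[y^j]T_M(1,y)=\binom{|X|-j-1}{r-1}-\sum_{\substack{H\in \mathcal{H}(M),\\ |H|>f_2(M)}} \binom{|H|-j-1}{r-1}.\]
   Context: $T_M(x,y)=\sum_{A\subseteq X}(x-1)^{r-rk(A)}(y-1)^{|A|-rk(A)}$ is the Tutte polynomial of $M$, and $[y^j]f(y)$ denotes the coefficient of $y^j$ in $f$. The closure of $A\subseteq X$ is $cl_M(A)=\{e\in X: rk(A\cup\{e\})=rk(A)\}$; a flat is a set $F$ with $cl_M(F)=F$; a hyperplane is a flat of rank $r-1$, and $\mathcal{H}(M)$ is the set of all hyperplanes of $M$. For $k\ge 1$, $f_k(M)=\max\{|F|: F \text{ a flat of } M,\ rk(F)=r-k\}$. *)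

theory Defs
  imports "HOL-Computational_Algebra.Polynomial"
begin

definition matroid :: "'a set \<Rightarrow> ('a set \<Rightarrow> nat) \<Rightarrow> bool" where
  "matroid X rk \<longleftrightarrow> finite X
     \<and> (\<forall>A. A \<subseteq> X \<longrightarrow> rk A \<le> card A)
     \<and> (\<forall>A B. A \<subseteq> B \<and> B \<subseteq> X \<longrightarrow> rk A \<le> rk B)
     \<and> (\<forall>A B. A \<subseteq> X \<and> B \<subseteq> X \<longrightarrow> rk (A \<union> B) + rk (A \<inter> B) \<le> rk A + rk B)"

definition mclosure :: "'a set \<Rightarrow> ('a set \<Rightarrow> nat) \<Rightarrow> 'a set \<Rightarrow> 'a set" where
  "mclosure X rk A = {e \<in> X. rk (insert e A) = rk A}"

definition flat :: "'a set \<Rightarrow> ('a set \<Rightarrow> nat) \<Rightarrow> 'a set \<Rightarrow> bool" where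
  "flat X rk F \<longleftrightarrow> F \<subseteq> X \<and> mclosure X rk F = F"

definition hyperplanes :: "'a set \<Rightarrow> ('a set \<Rightarrow> nat) \<Rightarrow> 'a set set" where
  "hyperplanes X rk = {H. flat X rk H \<and> rk H + 1 = rk X}"

definition fk :: "'a set \<Rightarrow> ('a set \<Rightarrow> nat) \<Rightarrow> nat \<Rightarrow> nat" where
  "fk X rk k = Max {card F | F. flat X rk F \<and> rk F + k = rk X}"

text \<open>Tutte polynomial as a bivariate polynomial: outer variable x, inner variable y.\<close>
definition tutte :: "'a set \<Rightarrow> ('a set \<Rightarrow> nat) \<Rightarrow> int poly poly" where
  "tutte X rk = (\<Sum>A\<in>Pow X. [:[:-1:], 1:] ^ (rk X - rk A) * [: [:-1, 1:] ^ (card A - rk A) :])"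

definition binom_int :: "int \<Rightarrow> nat \<Rightarrow> int" where
  "binom_int n k = (if n < 0 then 0 else int (nat n choose k))"

end

theory Submission
  imports Defs
begin


lemma m_fin: "matroid X rk \<Longrightarrow> finite X" by (simp add: matroid_def)
lemma m_card: "matroid X rk \<Longrightarrow> A \<subseteq> X \<Longrightarrow> rk A \<le> card A" by (simp add: matroid_def)
lemma m_mono: "matroid X rk \<Longrightarrow> A \<subseteq> B \<Longrightarrow> B \<subseteq> X \<Longrightarrow> rk A \<le> rk B" by (simp add: matroid_def)
lemma m_sub: "matroid X rk \<Longrightarrow> A \<subseteq> X \<Longrightarrow> B \<subseteq> X \<Longrightarrow> rk (A \<union> B) + rk (A \<inter> B) \<le> rk A + rk B"
  by (simp add: matroid_def)

lemma m_insert: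
  assumes m: "matroid X rk" and A: "A \<subseteq> X" and e: "e \<in> X"
  shows "rk (insert e A) \<le> rk A + 1"
proof -
  have "rk (A \<union> {e}) + rk (A \<inter> {e}) \<le> rk A + rk {e}" using m_sub[OF m A, of "{e}"] e by blast
  moreover have "rk {e} \<le> 1" using m_card[OF m, of "{e}"] e by auto
  ultimately show ?thesis by auto
qed

lemma m_aug:
  assumes m: "matroid X rk" and fS: "finite S"
  shows "A \<subseteq> X \<Longrightarrow> S \<subseteq> X \<Longrightarrow> rk A \<le> k \<Longrightarrow> k \<le> rk (A \<union> S) \<Longrightarrow> \<exists>B. A \<subseteq> B \<and> B \<subseteq> X \<and> rk B = k"
  using fS
proof (induction S rule: finite_induct)
  case empty
  then show ?case by auto
next
  case (insert x S)
  show ?case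
  proof (cases "k \<le> rk (A \<union> S)")
    case True
    then show ?thesis using insert by auto
  next
    case False
    have "rk (insert x (A \<union> S)) \<le> rk (A \<union> S) + 1"
      using m_insert[OF m, of "A \<union> S" x] insert.prems by auto
    then have "rk (A \<union> insert x S) = k" using False insert.prems by auto
    then show ?thesis using insert.prems by (intro exI[of _ "A \<union> insert x S"]) auto
  qed
qed

lemma cl_sub: "mclosure X rk A \<subseteq> X" by (auto simp: mclosure_def)
lemma cl_ext: "A \<subseteq> X \<Longrightarrow> A \<subseteq> mclosure X rk A" by (auto simp: mclosure_def insert_absorb)

lemma cl_rank_aux:
  assumes m: "matroid X rk" and A: "A \<subseteq> X" and fS: "finite S"
  shows "S \<subseteq> mclosure X rk A \<Longrightarrow> rk (A \<union> S) = rk A"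
  using fS
proof (induction S rule: finite_induct)
  case empty
  then show ?case by auto
next
  case (insert x S)
  have x: "x \<in> X" "rk (insert x A) = rk A" using insert.prems by (auto simp: mclosure_def)
  have S: "S \<subseteq> X" using insert.prems cl_sub[of X rk A] by blast
  have IH: "rk (A \<union> S) = rk A" using insert by auto
  have "rk ((A \<union> S) \<union> insert x A) + rk ((A \<union> S) \<inter> insert x A) \<le> rk (A \<union> S) + rk (insert x A)"
    using m_sub[OF m, of "A \<union> S" "insert x A"] A S x by auto
  moreover have "rk A \<le> rk ((A \<union> S) \<inter> insert x A)" using m_mono[OF m, of A "(A \<union> S) \<inter> insert x A"] A x S by auto
  moreover have "(A \<union> S) \<union> insert x A = A \<union> insert x S" by auto
  moreover have "rk A \<le> rk (A \<union> insert x S)" using m_mono[OF m, of A "A \<union> insert x S"] A S x by auto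
  ultimately show ?case using IH x by auto
qed

lemma cl_rank:
  assumes m: "matroid X rk" and A: "A \<subseteq> X"
  shows "rk (mclosure X rk A) = rk A"
proof -
  have "finite (mclosure X rk A)" using m_fin[OF m] cl_sub finite_subset by metis
  then have "rk (A \<union> mclosure X rk A) = rk A" using cl_rank_aux[OF m A] by auto
  moreover have "A \<union> mclosure X rk A = mclosure X rk A" using cl_ext[of A X rk, OF A] by auto
  ultimately show ?thesis by simp
qed

lemma cl_flat:
  assumes m: "matroid X rk" and A: "A \<subseteq> X"
  shows "flat X rk (mclosure X rk A)"
proof -
  let ?C = "mclosure X rk A"
  have CX: "?C \<subseteq> X" by (rule cl_sub)
  have AC: "A \<subseteq> ?C" by (rule cl_ext[OF A])
  have rC: "rk ?C = rk A" by (rule cl_rank[OF m A])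
  have "mclosure X rk ?C = ?C"
  proof
    show "mclosure X rk ?C \<subseteq> ?C"
    proof
      fix e assume e: "e \<in> mclosure X rk ?C"
      then have e1: "e \<in> X" "rk (insert e ?C) = rk ?C" unfolding mclosure_def by auto
      have s1: "insert e A \<subseteq> X" using A e1(1) by blast
      have s2: "insert e A \<subseteq> insert e ?C" using AC by blast
      have s3: "insert e ?C \<subseteq> X" using CX e1(1) by blast
      have "rk A \<le> rk (insert e A)" using m_mono[OF m _ s1, of A] by blast
      moreover have "rk (insert e A) \<le> rk (insert e ?C)" using m_mono[OF m s2 s3] .
      ultimately have "rk (insert e A) = rk A" using e1(2) rC by linarith
      then show "e \<in> ?C" using e1(1) unfolding mclosure_def by blast
    qed
  next
    show "?C \<subseteq> mclosure X rk ?C" by (rule cl_ext[OF CX])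
  qed
  then show ?thesis using CX unfolding flat_def by blast
qed

lemma cl_least:
  assumes m: "matroid X rk" and F: "flat X rk F" and AF: "A \<subseteq> F"
  shows "mclosure X rk A \<subseteq> F"
proof
  fix e assume e: "e \<in> mclosure X rk A"
  have FX: "F \<subseteq> X" using F by (auto simp: flat_def)
  have e1: "e \<in> X" "rk (insert e A) = rk A" using e by (auto simp: mclosure_def)
  have "rk (F \<union> insert e A) + rk (F \<inter> insert e A) \<le> rk F + rk (insert e A)"
    using m_sub[OF m, of F "insert e A"] FX AF e1 by auto
  moreover have "rk A \<le> rk (F \<inter> insert e A)" using m_mono[OF m, of A "F \<inter> insert e A"] AF FX by auto
  moreover have "F \<union> insert e A = insert e F" using AF by auto
  moreover have "rk F \<le> rk (insert e F)" using m_mono[OF m, of F "insert e F"] FX e1 by auto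
  ultimately have "rk (insert e F) = rk F" using e1 by auto
  then have "e \<in> mclosure X rk F" using e1 by (auto simp: mclosure_def)
  then show "e \<in> F" using F by (auto simp: flat_def)
qed

lemma flat_eq:
  assumes m: "matroid X rk" and F: "flat X rk F" and H: "flat X rk H" and FH: "F \<subseteq> H"
    and r: "rk F = rk H"
  shows "F = H"
proof
  show "H \<subseteq> F"
  proof
    fix e assume e: "e \<in> H"
    have HX: "H \<subseteq> X" using H by (auto simp: flat_def)
    have "rk (insert e F) \<le> rk H" using m_mono[OF m, of "insert e F" H] e FH HX by auto
    moreover have "rk F \<le> rk (insert e F)" using m_mono[OF m, of F "insert e F"] e FH HX by auto
    ultimately have "e \<in> mclosure X rk F" using r e HX by (auto simp: mclosure_def)
    then show "e \<in> F" using F by (auto simp: flat_def)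
  qed
qed (rule FH)

lemma fk_ge:
  assumes m: "matroid X rk" and F: "flat X rk F" "rk F + 2 = rk X"
  shows "card F \<le> fk X rk 2"
proof -
  have "{card F | F. flat X rk F \<and> rk F + 2 = rk X} \<subseteq> card ` Pow X" by (auto simp: flat_def)
  then have "finite {card F | F. flat X rk F \<and> rk F + 2 = rk X}"
    using m_fin[OF m] finite_subset by blast
  then show ?thesis unfolding fk_def using F by (intro Max_ge) auto
qed

lemma small_set:
  assumes m: "matroid X rk" and A: "A \<subseteq> X" and r: "rk A + 2 \<le> rk X"
  shows "card A \<le> fk X rk 2"
proof -
  have fX: "finite X" by (rule m_fin[OF m])
  have AX: "A \<union> X = X" using A by blast
  have k1: "rk A \<le> rk X - 2" using r by linarith
  have k2: "rk X - 2 \<le> rk (A \<union> X)" unfolding AX by linarith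
  obtain B where B: "A \<subseteq> B" "B \<subseteq> X" "rk B = rk X - 2"
    using m_aug[where S=X, OF m fX A subset_refl k1 k2] by blast
  let ?C = "mclosure X rk B"
  have Cf: "flat X rk ?C" by (rule cl_flat[OF m B(2)])
  have "rk ?C = rk B" by (rule cl_rank[OF m B(2)])
  then have "rk ?C + 2 = rk X" using B(3) r by linarith
  then have c1: "card ?C \<le> fk X rk 2" by (rule fk_ge[OF m Cf])
  have "A \<subseteq> ?C" using B(1) cl_ext[OF B(2)] by (rule order_trans)
  moreover have "finite ?C" using fX cl_sub by (rule finite_subset[rotated])
  ultimately have "card A \<le> card ?C" by (rule card_mono[rotated])
  then show ?thesis using c1 by linarith
qed

lemma fk_lb:
  assumes m: "matroid X rk" and r: "2 \<le> rk X"
  shows "rk X - 2 \<le> fk X rk 2"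
proof -
  have fX: "finite X" by (rule m_fin[OF m])
  have "rk {} = 0" using m_card[OF m empty_subsetI] by simp
  then have k1: "rk {} \<le> rk X - 2" by simp
  have k2: "rk X - 2 \<le> rk ({} \<union> X)" by simp
  obtain B where B: "{} \<subseteq> B" "B \<subseteq> X" "rk B = rk X - 2"
    using m_aug[where S=X, OF m fX empty_subsetI subset_refl k1 k2] by blast
  let ?C = "mclosure X rk B"
  have Cf: "flat X rk ?C" by (rule cl_flat[OF m B(2)])
  have "rk ?C = rk B" by (rule cl_rank[OF m B(2)])
  then have rC: "rk ?C + 2 = rk X" using B(3) r by linarith
  then have c1: "card ?C \<le> fk X rk 2" by (rule fk_ge[OF m Cf])
  have "rk ?C \<le> card ?C" by (rule m_card[OF m cl_sub])
  then show ?thesis using rC c1 by linarith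
qed



lemma sum_pow_card:
  assumes "finite S"
  shows "(\<Sum>A\<in>Pow S. c (card A)) = (\<Sum>k\<le>card S. of_nat (card S choose k) * (c k :: int))"
proof -
  have "(\<Sum>A\<in>Pow S. c (card A)) = (\<Sum>k\<le>card S. \<Sum>A\<in>{A. A \<in> Pow S \<and> card A = k}. c (card A))"
    using assms by (intro sum.group[symmetric]) (auto intro: card_mono)
  also have "\<dots> = (\<Sum>k\<le>card S. of_nat (card S choose k) * c k)"
  proof (rule sum.cong[OF refl])
    fix k
    have "{A. A \<in> Pow S \<and> card A = k} = {B. B \<subseteq> S \<and> card B = k}" by auto
    then have "card {A. A \<in> Pow S \<and> card A = k} = card S choose k" using n_subsets[OF assms] by simp
    moreover have "(\<Sum>A\<in>{A. A \<in> Pow S \<and> card A = k}. c (card A)) = (\<Sum>A\<in>{A. A \<in> Pow S \<and> card A = k}. c k)"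
      by (rule sum.cong) auto
    ultimately show "(\<Sum>A\<in>{A. A \<in> Pow S \<and> card A = k}. c (card A)) = of_nat (card S choose k) * c k"
      by simp
  qed
  finally show ?thesis .
qed

definition ff :: "nat \<Rightarrow> nat \<Rightarrow> int poly" where
  "ff r k = (if r \<le> k then [:-1,1:] ^ (k - r) else 0)"

definition DD :: "nat \<Rightarrow> nat \<Rightarrow> int poly" where
  "DD r m = (\<Sum>k\<le>m. smult (of_nat (m choose k)) (ff r k))"

lemma ff_Suc: "1 \<le> r \<Longrightarrow> ff r (Suc k) = [:-1,1:] * ff r k + (if k = r - 1 then 1 else 0)"
  by (auto simp: ff_def Suc_diff_le)

lemma DD_Suc:
  assumes r: "1 \<le> r"
  shows "DD r (Suc m) = pCons 0 (DD r m) + [:of_nat (m choose (r - 1)):]"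
proof -
  let ?z = "[:-1,1:] :: int poly"
  have f0: "ff r 0 = 0" using r by (simp add: ff_def)
  have "DD r (Suc m) = (\<Sum>k\<le>m. smult (of_nat (Suc m choose Suc k)) (ff r (Suc k)))"
    unfolding DD_def by (subst sum.atMost_Suc_shift) (simp add: f0)
  also have "\<dots> = (\<Sum>k\<le>m. smult (of_nat (m choose k)) (ff r (Suc k)))
                 + (\<Sum>k\<le>m. smult (of_nat (m choose Suc k)) (ff r (Suc k)))"
    by (simp add: sum.distrib smult_add_left)
  also have "(\<Sum>k\<le>m. smult (of_nat (m choose Suc k)) (ff r (Suc k))) = DD r m"
  proof -
    have "(\<Sum>k\<le>Suc m. smult (of_nat (m choose k)) (ff r k)) = (\<Sum>k\<le>m. smult (of_nat (m choose Suc k)) (ff r (Suc k)))"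
      by (subst sum.atMost_Suc_shift) (simp add: f0)
    moreover have "(\<Sum>k\<le>Suc m. smult (of_nat (m choose k)) (ff r k)) = DD r m"
      unfolding DD_def by simp
    ultimately show ?thesis by simp
  qed
  also have "(\<Sum>k\<le>m. smult (of_nat (m choose k)) (ff r (Suc k)))
     = ?z * DD r m + (\<Sum>k\<le>m. smult (of_nat (m choose k)) (if k = r - 1 then 1 else 0))"
    unfolding DD_def by (simp add: ff_Suc[OF r] smult_add_right sum.distrib sum_distrib_left mult_smult_right)
  also have "(\<Sum>k\<le>m. smult (of_nat (m choose k)) (if k = r - 1 then 1 else (0::int poly))) = [:of_nat (m choose (r - 1)):]"
  proof -
    have "(\<Sum>k\<le>m. smult (of_nat (m choose k)) (if k = r - 1 then 1 else (0::int poly)))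
        = (\<Sum>k\<le>m. if k = r - 1 then [:of_nat (m choose k):] else 0)"
      by (rule sum.cong) auto
    also have "\<dots> = [:of_nat (m choose (r - 1)):]"
      by (simp add: sum.delta)
    finally show ?thesis .
  qed
  finally have "DD r (Suc m) = (1 + ?z) * DD r m + [:of_nat (m choose (r - 1)):]"
    by (simp add: algebra_simps)
  moreover have "(1 + ?z) = [:0,1:]" by (simp add: one_pCons)
  ultimately show ?thesis by simp
qed

lemma DD_coeff:
  assumes r: "1 \<le> r"
  shows "coeff (DD r m) j = binom_int (int m - int j - 1) (r - 1)"
proof (induction m arbitrary: j)
  case 0
  then show ?case using r by (simp add: DD_def ff_def binom_int_def)
next
  case (Suc m)
  show ?case
  proof (cases j)
    case 0
    then show ?thesis by (simp add: DD_Suc[OF r] binom_int_def)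
  next
    case (Suc j')
    then show ?thesis using Suc.IH[of j'] by (simp add: DD_Suc[OF r])
  qed
qed

lemma sum_coeff_ident:
  assumes r: "1 \<le> r"
  shows "(\<Sum>k\<le>m. of_nat (m choose k) * coeff (ff r k) j) = binom_int (int m - int j - 1) (r - 1)"
  using DD_coeff[OF r, of m j] unfolding DD_def by (simp add: coeff_sum)

lemma sum_delta_ident:
  "(\<Sum>k\<le>m. of_nat (m choose k) * (if k = r - 1 then 1 else 0)) = binom_int (int m - (-1) - 1) (r - 1)"
proof -
  have "(\<Sum>k\<le>m. of_nat (m choose k) * (if k = r - 1 then 1 else 0)) = (\<Sum>k\<le>m. if k = r - 1 then int (m choose k) else 0)"
    by (rule sum.cong) auto
  also have "\<dots> = int (m choose (r - 1))" by (simp add: sum.delta)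
  finally show ?thesis by (simp add: binom_int_def)
qed



lemma generic_split:
  fixes c :: "nat \<Rightarrow> int"
  assumes m: "matroid X rk" and c: "\<And>k. c k \<noteq> 0 \<Longrightarrow> fk X rk 2 < k"
  shows "(\<Sum>A\<in>Pow X. c (card A)) = (\<Sum>A\<in>{A\<in>Pow X. rk A = rk X}. c (card A))
     + (\<Sum>H\<in>{H \<in> hyperplanes X rk. card H > fk X rk 2}. \<Sum>A\<in>Pow H. c (card A))"
proof -
  let ?HH = "{H \<in> hyperplanes X rk. card H > fk X rk 2}"
  have fX: "finite X" using m_fin[OF m] .
  have HHX: "H \<subseteq> X" if "H \<in> ?HH" for H using that by (auto simp: hyperplanes_def flat_def)
  have "?HH \<subseteq> Pow X" using HHX by blast
  then have fHH: "finite ?HH" using fX finite_subset by blast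
  have s1: "(\<Sum>A\<in>Pow X. c (card A)) = (\<Sum>A\<in>Pow X. if rk A = rk X then c (card A) else 0)
      + (\<Sum>A\<in>Pow X. if rk A = rk X then 0 else c (card A))"
  proof -
    have "(\<Sum>A\<in>Pow X. c (card A)) = (\<Sum>A\<in>Pow X. (if rk A = rk X then c (card A) else 0)
      + (if rk A = rk X then 0 else c (card A)))" by (rule sum.cong) auto
    then show ?thesis by (simp only: sum.distrib)
  qed
  have s2: "(\<Sum>A\<in>{A\<in>Pow X. rk A = rk X}. c (card A)) = (\<Sum>A\<in>Pow X. if rk A = rk X then c (card A) else 0)"
    by (rule sum.inter_filter) (simp add: fX)
  have "(\<Sum>H\<in>?HH. \<Sum>A\<in>Pow H. c (card A)) = (\<Sum>H\<in>?HH. \<Sum>A\<in>Pow X. if A \<subseteq> H then c (card A) else 0)"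
  proof (rule sum.cong[OF refl])
    fix H assume H: "H \<in> ?HH"
    have e: "Pow H = {A \<in> Pow X. A \<subseteq> H}" using HHX[OF H] by auto
    show "(\<Sum>A\<in>Pow H. c (card A)) = (\<Sum>A\<in>Pow X. if A \<subseteq> H then c (card A) else 0)"
      unfolding e by (rule sum.inter_filter) (simp add: fX)
  qed
  also have "\<dots> = (\<Sum>A\<in>Pow X. \<Sum>H\<in>?HH. if A \<subseteq> H then c (card A) else 0)"
    by (rule sum.swap)
  also have "\<dots> = (\<Sum>A\<in>Pow X. if rk A = rk X then 0 else c (card A))"
  proof (rule sum.cong[OF refl])
    fix A assume "A \<in> Pow X"
    then have A: "A \<subseteq> X" by auto
    show "(\<Sum>H\<in>?HH. if A \<subseteq> H then c (card A) else 0) = (if rk A = rk X then 0 else c (card A))"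
    proof (cases "c (card A) = 0")
      case True
      then show ?thesis by (auto intro: sum.neutral)
    next
      case False
      then have big: "fk X rk 2 < card A" using c by auto
      show ?thesis
      proof (cases "rk A = rk X")
        case True
        have "\<not> A \<subseteq> H" if "H \<in> ?HH" for H
        proof
          assume "A \<subseteq> H"
          then have "rk A \<le> rk H" using m_mono[OF m] HHX[OF that] by auto
          then show False using that True by (auto simp: hyperplanes_def)
        qed
        then show ?thesis using True by simp
      next
        case False
        have "rk A \<le> rk X" using m_mono[OF m A] by simp
        moreover have "\<not> rk A + 2 \<le> rk X" using small_set[OF m A] big by auto
        ultimately have rA: "rk A + 1 = rk X" using False by auto
        let ?C = "mclosure X rk A"
        have Cf: "flat X rk ?C" using cl_flat[OF m A] .
        have Cr: "rk ?C = rk A" using cl_rank[OF m A] .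
        have "card A \<le> card ?C" using cl_ext[of A X rk, OF A] cl_sub[of X rk A] fX
          by (meson card_mono finite_subset)
        then have CHH: "?C \<in> ?HH" using Cf Cr rA big by (auto simp: hyperplanes_def)
        have iff: "A \<subseteq> H \<longleftrightarrow> H = ?C" if H: "H \<in> ?HH" for H
        proof
          assume AH: "A \<subseteq> H"
          have Hf: "flat X rk H" and Hr: "rk H + 1 = rk X" using H by (auto simp: hyperplanes_def)
          have "?C \<subseteq> H" using cl_least[OF m Hf AH] .
          then show "H = ?C" using flat_eq[OF m Cf Hf] Cr rA Hr by auto
        next
          assume "H = ?C"
          then show "A \<subseteq> H" using cl_ext[of A X rk, OF A] by simp
        qed
        have "(\<Sum>H\<in>?HH. if A \<subseteq> H then c (card A) else 0) = (\<Sum>H\<in>?HH. if H = ?C then c (card A) else 0)"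
          by (rule sum.cong[OF refl]) (simp add: iff)
        also have "\<dots> = c (card A)" using CHH fHH by (simp add: sum.delta)
        finally show ?thesis using False by simp
      qed
    qed
  qed
  finally show ?thesis using s1 s2 by simp
qed

lemma tt: "poly ([:[:-1:], 1:] ^ n * [:q:]) (1::int poly) = (if n = 0 then q else 0)"
proof -
  have h: "[:-1:] + (1::int poly) = 0" by (simp add: one_pCons)
  show ?thesis by (simp add: h)
qed

lemma tutte_at_1:
  assumes m: "matroid X rk"
  shows "coeff (poly (tutte X rk) 1) j = (\<Sum>A\<in>{A\<in>Pow X. rk A = rk X}. coeff (ff (rk X) (card A)) j)"
proof -
  have fX: "finite X" using m_fin[OF m] .
  have "poly (tutte X rk) 1 = (\<Sum>A\<in>Pow X. poly ([:[:-1:], 1:] ^ (rk X - rk A) * [: [:-1, 1:] ^ (card A - rk A) :]) 1)"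
    unfolding tutte_def by (rule poly_sum)
  also have "\<dots> = (\<Sum>A\<in>Pow X. if rk A = rk X then ff (rk X) (card A) else 0)"
  proof (rule sum.cong[OF refl])
    fix A assume "A \<in> Pow X"
    then have A: "A \<subseteq> X" by auto
    have "rk A \<le> rk X" using m_mono[OF m A] by simp
    moreover have "rk A \<le> card A" using m_card[OF m A] .
    ultimately show "poly ([:[:-1:], 1:] ^ (rk X - rk A) * [: [:-1, 1:] ^ (card A - rk A) :]) 1 = (if rk A = rk X then ff (rk X) (card A) else 0)"
      unfolding tt by (auto simp: ff_def)
  qed
  also have "\<dots> = (\<Sum>A\<in>{A\<in>Pow X. rk A = rk X}. ff (rk X) (card A))"
    by (rule sum.inter_filter[symmetric]) (simp add: fX)
  finally show ?thesis by (simp only: coeff_sum)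
qed

theorem theorem3p2:
  fixes X :: "'a set" and rk :: "'a set \<Rightarrow> nat" and j :: int
  assumes "matroid X rk"
    and "2 \<le> rk X"
    and "j > int (fk X rk 2) - int (rk X)"
  shows "(if j < 0 then 0 else coeff (poly (tutte X rk) 1) (nat j))
         = binom_int (int (card X) - j - 1) (rk X - 1)
           - (\<Sum>H \<in> {H \<in> hyperplanes X rk. card H > fk X rk 2}.
                binom_int (int (card H) - j - 1) (rk X - 1))"
proof -
  note m = assms(1)
  let ?HH = "{H \<in> hyperplanes X rk. card H > fk X rk 2}"
  let ?r = "rk X"
  have fX: "finite X" using m_fin[OF m] .
  have HHX: "H \<subseteq> X" if "H \<in> ?HH" for H using that by (auto simp: hyperplanes_def flat_def)
  have r1: "1 \<le> ?r" using assms(2) by simp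
  have jge: "j \<ge> -1" using fk_lb[OF m assms(2)] assms(2,3) by linarith
  have main: "binom_int (int (card X) - j - 1) (?r - 1) - (\<Sum>H\<in>?HH. binom_int (int (card H) - j - 1) (?r - 1))
      = (\<Sum>A\<in>{A\<in>Pow X. rk A = ?r}. c (card A))"
    if cnz: "\<And>k. c k \<noteq> 0 \<Longrightarrow> fk X rk 2 < k"
      and id: "\<And>m. (\<Sum>k\<le>m. of_nat (m choose k) * c k) = binom_int (int m - j - 1) (?r - 1)"
    for c :: "nat \<Rightarrow> int"
  proof -
    have "binom_int (int (card X) - j - 1) (?r - 1) = (\<Sum>A\<in>Pow X. c (card A))"
      using sum_pow_card[OF fX, of c] id by simp
    moreover have "(\<Sum>H\<in>?HH. binom_int (int (card H) - j - 1) (?r - 1)) = (\<Sum>H\<in>?HH. \<Sum>A\<in>Pow H. c (card A))"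
    proof (rule sum.cong[OF refl])
      fix H assume "H \<in> ?HH"
      then have "finite H" using HHX fX finite_subset by blast
      then show "binom_int (int (card H) - j - 1) (?r - 1) = (\<Sum>A\<in>Pow H. c (card A))"
        using sum_pow_card[of H c] id by simp
    qed
    moreover have "(\<Sum>A\<in>Pow X. c (card A)) = (\<Sum>A\<in>{A\<in>Pow X. rk A = rk X}. c (card A))
     + (\<Sum>H\<in>?HH. \<Sum>A\<in>Pow H. c (card A))"
      by (rule generic_split[OF m]) (rule cnz)
    ultimately show ?thesis by linarith
  qed
  show ?thesis
  proof (cases "j < 0")
    case True
    then have j: "j = -1" using jge by simp
    let ?c = "\<lambda>k. if k = ?r - 1 then 1 else 0 :: int"
    have c: "fk X rk 2 < k" if "?c k \<noteq> 0" for k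
      using that assms(3) j by (auto split: if_splits)
    have id: "(\<Sum>k\<le>m. of_nat (m choose k) * ?c k) = binom_int (int m - j - 1) (?r - 1)" for m
      using sum_delta_ident[of m ?r] j by simp
    have "(\<Sum>A\<in>{A\<in>Pow X. rk A = ?r}. ?c (card A)) = 0"
    proof (rule sum.neutral, clarify)
      fix A assume "A \<subseteq> X" "rk A = ?r"
      then have "?r \<le> card A" using m_card[OF m] by metis
      then show "?c (card A) = 0" using r1 by auto
    qed
    then have L: "(if j < 0 then 0 else coeff (poly (tutte X rk) 1) (nat j)) = (\<Sum>A\<in>{A\<in>Pow X. rk A = ?r}. ?c (card A))"
      using True by simp
    have M: "binom_int (int (card X) - j - 1) (?r - 1) - (\<Sum>H\<in>?HH. binom_int (int (card H) - j - 1) (?r - 1))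
      = (\<Sum>A\<in>{A\<in>Pow X. rk A = ?r}. ?c (card A))"
      by (rule main) (rule c, assumption, rule id)
    show ?thesis using L M by linarith
  next
    case False
    let ?c = "\<lambda>k. coeff (ff ?r k) (nat j)"
    have c: "fk X rk 2 < k" if "?c k \<noteq> 0" for k
    proof -
      have "?r \<le> k" using that by (auto simp: ff_def split: if_splits)
      moreover have "nat j \<le> k - ?r"
      proof (rule ccontr)
        assume "\<not> nat j \<le> k - ?r"
        then have "degree ([:-1,1:] ^ (k - ?r) :: int poly) < nat j" by (simp add: degree_linear_power)
        then have "?c k = 0" using \<open>?r \<le> k\<close> by (simp add: ff_def coeff_eq_0)
        then show False using that by simp
      qed
      ultimately show ?thesis using assms(3) False by linarith
    qed
    have id: "(\<Sum>k\<le>m. of_nat (m choose k) * ?c k) = binom_int (int m - j - 1) (?r - 1)" for m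
      using sum_coeff_ident[OF r1, of m "nat j"] False by simp
    have L: "(if j < 0 then 0 else coeff (poly (tutte X rk) 1) (nat j)) = (\<Sum>A\<in>{A\<in>Pow X. rk A = ?r}. ?c (card A))"
      using False tutte_at_1[OF m, of "nat j"] by (simp only: if_False)
    have M: "binom_int (int (card X) - j - 1) (?r - 1) - (\<Sum>H\<in>?HH. binom_int (int (card H) - j - 1) (?r - 1))
      = (\<Sum>A\<in>{A\<in>Pow X. rk A = ?r}. ?c (card A))"
      by (rule main) (rule c, assumption, rule id)
    show ?thesis using L M by linarith
  qed
qed

end
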